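(* Let $V=\{1,\dots,n\}$ and let $H=(V,E)$ with $E=\{e\subseteq V : 2\le|e|\le 3\}$. The toric ideal $I_H$ is generated by polynomials of degree $2$ and $3$ (quadrics and cubics). In particular, for $H'=(V,E')$ with $E'=\{e\subseteq V : |e|\ge 2\}$, the toric ideal $I_{H'}$ — which is the ideal of the image of the first tangential variety $\mathrm{Tan}((\mathbb P^1)^n)$ in higher cumulant coordinates — is generated in degrees $2$ and $3$.
   Context: For a hypergraph $H=(V,E)$ (edges are nonempty subsets of $V=\{1,\dots,n\}$, no repeated edges) and a field $K$, the toric ideal $I_H$ is the kernel of the $K$-algebra homomorphism $K[t_e : e\in E]\to K[x_1,\dots,x_n]$, $t_e\mapsto\prod_{j\in e}x_j$. By a result of Sturmfels and Zwiernik, the set of polynomials vanishing on the image of $\mathrm{Tan}((\mathbb P^1)^n)$ in higher cumulants is exactly $I_{H'}$ for the hypergraph $H'$ whose edges are all subsets of $V$ of size at least $2$. *)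

theory Defs
  imports Main "HOL-Library.Poly_Mapping"
begin

text \<open>Multivariate polynomials over a field 'k in variables indexed by 'v are
  represented as finitely supported maps from monomials (exponent vectors
  'v => nat) to coefficients.\<close>
type_synonym ('v, 'k) mpoly = "('v \<Rightarrow>\<^sub>0 nat) \<Rightarrow>\<^sub>0 'k"

definition mvar :: "'v \<Rightarrow> ('v, 'k::comm_ring_1) mpoly" where
  "mvar v = Poly_Mapping.single (Poly_Mapping.single v 1) 1"

definition mconst :: "'k::comm_ring_1 \<Rightarrow> ('v, 'k) mpoly" where
  "mconst c = Poly_Mapping.single 0 c"

text \<open>The polynomial ring K[t_e : e \<in> E] as a subset: all monomials only use
  variables from E.\<close>
definition poly_ring_on :: "'v set \<Rightarrow> ('v, 'k::comm_ring_1) mpoly set" where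
  "poly_ring_on E = {p. \<forall>m \<in> Poly_Mapping.keys p. Poly_Mapping.keys m \<subseteq> E}"

definition total_degree :: "('v, 'k::comm_ring_1) mpoly \<Rightarrow> nat" where
  "total_degree p = Max ((\<lambda>m. \<Sum>v\<in>Poly_Mapping.keys m. Poly_Mapping.lookup m v) ` Poly_Mapping.keys p)"

definition ideal_gen_on :: "'v set \<Rightarrow> ('v, 'k::comm_ring_1) mpoly set \<Rightarrow> ('v, 'k) mpoly set" where
  "ideal_gen_on E G = {p. \<exists>F c. finite F \<and> F \<subseteq> G \<and> (\<forall>g\<in>F. c g \<in> poly_ring_on E)
                          \<and> p = (\<Sum>g\<in>F. c g * g)}"

definition edge_monomial :: "nat set \<Rightarrow> (nat, 'k::comm_ring_1) mpoly" where
  "edge_monomial e = (\<Prod>j\<in>e. mvar j)"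

definition hyper_hom :: "(nat set, 'k::comm_ring_1) mpoly \<Rightarrow> (nat, 'k) mpoly" where
  "hyper_hom p = (\<Sum>m\<in>Poly_Mapping.keys p. mconst (Poly_Mapping.lookup p m) *
                     (\<Prod>e\<in>Poly_Mapping.keys m. edge_monomial e ^ Poly_Mapping.lookup m e))"

definition toric_ideal :: "nat set set \<Rightarrow> (nat set, 'k::field) mpoly set" where
  "toric_ideal E = {p \<in> poly_ring_on E. hyper_hom p = 0}"

definition generated_in_degrees_2_3 :: "nat set set \<Rightarrow> (nat set, 'k::field) mpoly set \<Rightarrow> bool" where
  "generated_in_degrees_2_3 E I \<longleftrightarrow>
     (\<exists>G. G \<subseteq> poly_ring_on E \<and> (\<forall>g\<in>G. g \<noteq> 0 \<and> total_degree g \<in> {2, 3})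
          \<and> ideal_gen_on E G = I)"

end

theory Submission
  imports Defs "HOL-Library.Multiset"
begin

definition pm :: "'a multiset \<Rightarrow> ('a \<Rightarrow>\<^sub>0 nat)" where
  "pm M = Abs_poly_mapping (count M)"

definition msof :: "('a \<Rightarrow>\<^sub>0 nat) \<Rightarrow> 'a multiset" where
  "msof A = Abs_multiset (Poly_Mapping.lookup A)"

lemma lookup_pm[simp]: "Poly_Mapping.lookup (pm M) = count M"
  unfolding pm_def by (simp add: Poly_Mapping.lookup_Abs_poly_mapping)

lemma count_msof[simp]: "count (msof A) = Poly_Mapping.lookup A"
  unfolding msof_def
  by (rule count_Abs_multiset) (metis Poly_Mapping.finite_lookup_nat)

lemma pm_msof[simp]: "pm (msof A) = A"
  by (rule poly_mapping_eqI) simp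

lemma msof_pm[simp]: "msof (pm M) = M"
  by (rule multiset_eqI) simp

lemma keys_pm[simp]: "Poly_Mapping.keys (pm M) = set_mset M"
  by (auto simp: in_keys_iff)

lemma set_msof[simp]: "set_mset (msof A) = Poly_Mapping.keys A"
  by (metis keys_pm pm_msof)

lemma pm_add: "pm (M + N) = pm M + pm N"
  by (rule poly_mapping_eqI) (simp add: lookup_add)

lemma pm_empty[simp]: "pm {#} = 0"
  by (rule poly_mapping_eqI) simp

lemma pm_single: "pm {#x#} = Poly_Mapping.single x 1"
  by (rule poly_mapping_eqI) (simp add: lookup_single when_def)

lemma pm_add_mset: "pm (add_mset x M) = Poly_Mapping.single x 1 + pm M"
  by (metis add_mset_add_single pm_add pm_single add.commute)

lemma pm_inj: "pm M = pm N \<Longrightarrow> M = N"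
  by (metis msof_pm)

lemma msof_add: "msof (A + B) = msof A + msof B"
  by (rule multiset_eqI) (simp add: lookup_add)

definition Phi :: "'a set multiset \<Rightarrow> 'a multiset" where
  "Phi M = sum_mset (image_mset mset_set M)"

lemma Phi_add[simp]: "Phi (M + N) = Phi M + Phi N"
  by (simp add: Phi_def)

lemma Phi_add_mset[simp]: "Phi (add_mset e M) = mset_set e + Phi M"
  by (simp add: Phi_def)

lemma Phi_empty[simp]: "Phi {#} = {#}"
  by (simp add: Phi_def)

definition psi :: "(nat set \<Rightarrow>\<^sub>0 nat) \<Rightarrow> (nat \<Rightarrow>\<^sub>0 nat)" where
  "psi m = pm (Phi (msof m))"

lemma psi_add: "psi (a + b) = psi a + psi b"
  by (simp add: psi_def msof_add pm_add)

lemma edge_monomial_eq: "(edge_monomial e :: (nat,'k::comm_ring_1) mpoly) = Poly_Mapping.single (pm (mset_set e)) 1"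
proof (cases "finite e")
  case True
  then show ?thesis
  proof (induction e rule: finite_induct)
    case empty
    then show ?case by (simp add: edge_monomial_def)
  next
    case (insert x F)
    then show ?case
      by (simp add: edge_monomial_def mvar_def pm_add_mset mult_single)
  qed
next
  case False
  then show ?thesis by (simp add: edge_monomial_def)
qed

lemma prod_edge_mset: "prod_mset (image_mset edge_monomial M) = (Poly_Mapping.single (pm (Phi M)) 1 :: (nat,'k::comm_ring_1) mpoly)"
  by (induction M) (simp_all add: edge_monomial_eq pm_add mult_single)

lemma prod_edge_keys: "(\<Prod>e\<in>Poly_Mapping.keys m. edge_monomial e ^ Poly_Mapping.lookup m e) = (Poly_Mapping.single (psi m) 1 :: (nat,'k::comm_ring_1) mpoly)"
proof -
  have "(\<Prod>e\<in>Poly_Mapping.keys m. (edge_monomial e :: (nat,'k) mpoly) ^ Poly_Mapping.lookup m e)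
     = (\<Prod>e\<in>set_mset (msof m). edge_monomial e ^ count (msof m) e)" by simp
  also have "\<dots> = prod_mset (image_mset edge_monomial (msof m))"
    by (simp add: image_prod_mset_multiplicity)
  finally show ?thesis by (simp add: prod_edge_mset psi_def)
qed

definition H :: "(nat set, 'k::comm_ring_1) mpoly \<Rightarrow> (nat, 'k) mpoly" where
  "H p = (\<Sum>m\<in>Poly_Mapping.keys p. Poly_Mapping.single (psi m) (Poly_Mapping.lookup p m))"

lemma hyper_hom_H: "hyper_hom p = H p"
  unfolding hyper_hom_def H_def
  by (rule sum.cong) (simp_all add: prod_edge_keys mconst_def mult_single)

lemma H_add: "H (p + q) = H p + H q"
  unfolding H_def
  by (rule setsum_keys_plus_distrib) (simp_all add: single_add)

lemma H_zero[simp]: "H 0 = 0"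
  by (simp add: H_def)

lemma H_single[simp]: "H (Poly_Mapping.single a c) = Poly_Mapping.single (psi a) c"
  by (cases "c = 0") (simp_all add: H_def)

lemma H_sum: "H (\<Sum>i\<in>S. f i) = (\<Sum>i\<in>S. H (f i))"
  by (induction S rule: infinite_finite_induct) (simp_all add: H_add)

lemma pm_expand: "p = (\<Sum>a\<in>Poly_Mapping.keys p. Poly_Mapping.single a (Poly_Mapping.lookup p a))"
proof (rule poly_mapping_eqI)
  fix k
  have "Poly_Mapping.lookup (\<Sum>a\<in>Poly_Mapping.keys p. Poly_Mapping.single a (Poly_Mapping.lookup p a)) k
      = (\<Sum>a\<in>Poly_Mapping.keys p. if a = k then Poly_Mapping.lookup p a else 0)"
    by (simp add: lookup_sum lookup_single when_def)
  also have "\<dots> = Poly_Mapping.lookup p k"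
    by (simp add: sum.delta' in_keys_iff)
  finally show "Poly_Mapping.lookup p k = Poly_Mapping.lookup (\<Sum>a\<in>Poly_Mapping.keys p. Poly_Mapping.single a (Poly_Mapping.lookup p a)) k" by simp
qed

lemma H_mult: "H (p * q) = H p * H q"
proof -
  have "p * q = (\<Sum>a\<in>Poly_Mapping.keys p. Poly_Mapping.single a (Poly_Mapping.lookup p a)) *
                (\<Sum>b\<in>Poly_Mapping.keys q. Poly_Mapping.single b (Poly_Mapping.lookup q b))"
    using pm_expand[of p] pm_expand[of q] by simp
  also have "\<dots> = (\<Sum>a\<in>Poly_Mapping.keys p. \<Sum>b\<in>Poly_Mapping.keys q.
         Poly_Mapping.single (a + b) (Poly_Mapping.lookup p a * Poly_Mapping.lookup q b))"
    by (simp add: sum_product mult_single)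
  finally have "H (p * q) = (\<Sum>a\<in>Poly_Mapping.keys p. \<Sum>b\<in>Poly_Mapping.keys q.
         Poly_Mapping.single (psi a + psi b) (Poly_Mapping.lookup p a * Poly_Mapping.lookup q b))"
    by (simp add: H_sum psi_add)
  also have "\<dots> = H p * H q"
    by (simp add: H_def sum_product mult_single)
  finally show ?thesis .
qed

lemma H_uminus: "H (- p) = - H p"
  by (metis H_add H_zero add.right_inverse add_eq_0_iff)

lemma H_diff: "H (p - q) = H p - H q"
  by (metis H_add H_uminus diff_conv_add_uminus)


lemma keys_diff_sub: "Poly_Mapping.keys (a - b) \<subseteq> Poly_Mapping.keys a \<union> Poly_Mapping.keys (b::'a \<Rightarrow>\<^sub>0 'b::ab_group_add)"
  by (auto simp: in_keys_iff lookup_minus)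

lemma pr_zero[simp]: "0 \<in> poly_ring_on E"
  by (simp add: poly_ring_on_def)

lemma pr_add: "p \<in> poly_ring_on E \<Longrightarrow> q \<in> poly_ring_on E \<Longrightarrow> p + q \<in> poly_ring_on E"
  unfolding poly_ring_on_def mem_Collect_eq by (meson Un_iff keys_add subsetD)

lemma pr_diff: "p \<in> poly_ring_on E \<Longrightarrow> q \<in> poly_ring_on E \<Longrightarrow> p - q \<in> poly_ring_on E"
  unfolding poly_ring_on_def mem_Collect_eq by (meson Un_iff keys_diff_sub subsetD)

lemma keys_add_sub: "Poly_Mapping.keys (a + b) \<subseteq> Poly_Mapping.keys a \<union> Poly_Mapping.keys (b::'a \<Rightarrow>\<^sub>0 nat)"
  by (auto simp: in_keys_iff lookup_add)

lemma pr_mult: "p \<in> poly_ring_on E \<Longrightarrow> q \<in> poly_ring_on E \<Longrightarrow> p * q \<in> poly_ring_on E"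
  unfolding poly_ring_on_def mem_Collect_eq
proof (intro ballI)
  fix m assume P: "\<forall>m\<in>Poly_Mapping.keys p. Poly_Mapping.keys m \<subseteq> E"
    and Q: "\<forall>m\<in>Poly_Mapping.keys q. Poly_Mapping.keys m \<subseteq> E"
    and m: "m \<in> Poly_Mapping.keys (p * q)"
  then obtain a b where ab: "m = a + b" "a \<in> Poly_Mapping.keys p" "b \<in> Poly_Mapping.keys q"
    using keys_mult by blast
  have "Poly_Mapping.keys m \<subseteq> Poly_Mapping.keys a \<union> Poly_Mapping.keys b"
    unfolding ab by (rule keys_add_sub)
  then show "Poly_Mapping.keys m \<subseteq> E" using P Q ab by blast
qed
lemma pr_sum: "(\<And>i. i \<in> S \<Longrightarrow> f i \<in> poly_ring_on E) \<Longrightarrow> sum f S \<in> poly_ring_on E"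
  by (induction S rule: infinite_finite_induct) (auto intro: pr_add)

lemma pr_single: "Poly_Mapping.keys m \<subseteq> E \<Longrightarrow> Poly_Mapping.single m c \<in> poly_ring_on E"
  by (simp add: poly_ring_on_def)

lemma pr_const: "Poly_Mapping.single 0 c \<in> poly_ring_on E"
  by (simp add: poly_ring_on_def)

lemma pr_subkeys: "q \<in> poly_ring_on E \<Longrightarrow> Poly_Mapping.keys p \<subseteq> Poly_Mapping.keys q \<Longrightarrow> p \<in> poly_ring_on E"
  unfolding poly_ring_on_def by blast

lemma ig_zero: "0 \<in> ideal_gen_on E G"
  unfolding ideal_gen_on_def by (rule CollectI, rule exI[of _ "{}"]) simp

lemma ig_gen: "g \<in> G \<Longrightarrow> g \<in> ideal_gen_on E G"
  unfolding ideal_gen_on_def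
  by (rule CollectI, rule exI[of _ "{g}"], rule exI[of _ "\<lambda>_. 1"]) (simp add: poly_ring_on_def)

lemma ig_add:
  assumes "p \<in> ideal_gen_on E G" "q \<in> ideal_gen_on E G"
  shows "p + q \<in> ideal_gen_on E G"
proof -
  obtain F1 c1 where 1: "finite F1" "F1 \<subseteq> G" "\<forall>g\<in>F1. c1 g \<in> poly_ring_on E" "p = (\<Sum>g\<in>F1. c1 g * g)"
    using assms(1) unfolding ideal_gen_on_def by blast
  obtain F2 c2 where 2: "finite F2" "F2 \<subseteq> G" "\<forall>g\<in>F2. c2 g \<in> poly_ring_on E" "q = (\<Sum>g\<in>F2. c2 g * g)"
    using assms(2) unfolding ideal_gen_on_def by blast
  define c where "c g = (if g \<in> F1 then c1 g else 0) + (if g \<in> F2 then c2 g else 0)" for g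
  have "(\<Sum>g\<in>F1 \<union> F2. c g * g) = (\<Sum>g\<in>F1 \<union> F2. (if g \<in> F1 then c1 g * g else 0)) + (\<Sum>g\<in>F1 \<union> F2. (if g \<in> F2 then c2 g * g else 0))"
    unfolding sum.distrib[symmetric] by (rule sum.cong) (simp_all add: c_def distrib_right)
  also have "\<dots> = p + q"
    using 1 2 by (simp add: sum.inter_restrict[symmetric] Int_absorb1 Int_absorb2 sup_commute)
  finally have "p + q = (\<Sum>g\<in>F1 \<union> F2. c g * g)" by simp
  moreover have "\<forall>g\<in>F1 \<union> F2. c g \<in> poly_ring_on E"
    using 1 2 unfolding c_def by (auto intro!: pr_add)
  ultimately show ?thesis using 1 2 unfolding ideal_gen_on_def
    by (intro CollectI exI[of _ "F1 \<union> F2"] exI[of _ c]) simp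
qed

lemma ig_mult:
  assumes "r \<in> poly_ring_on E" "p \<in> ideal_gen_on E G"
  shows "r * p \<in> ideal_gen_on E G"
proof -
  obtain F c where 1: "finite F" "F \<subseteq> G" "\<forall>g\<in>F. c g \<in> poly_ring_on E" "p = (\<Sum>g\<in>F. c g * g)"
    using assms(2) unfolding ideal_gen_on_def by blast
  have "r * p = (\<Sum>g\<in>F. (r * c g) * g)" unfolding 1(4) sum_distrib_left
    by (rule sum.cong) (simp_all add: mult.assoc)
  moreover have "\<forall>g\<in>F. r * c g \<in> poly_ring_on E" using 1(3) assms(1) pr_mult by blast
  ultimately show ?thesis using 1(1,2) unfolding ideal_gen_on_def
    by (intro CollectI exI[of _ F] exI[of _ "\<lambda>g. r * c g"]) simp
qed

lemma ig_uminus: "p \<in> ideal_gen_on E G \<Longrightarrow> - p \<in> ideal_gen_on E G"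
proof -
  assume "p \<in> ideal_gen_on E G"
  then have "Poly_Mapping.single 0 (-1) * p \<in> ideal_gen_on E G"
    by (rule ig_mult[OF pr_const])
  then show ?thesis by (simp add: single_uminus)
qed

lemma ig_diff: "p \<in> ideal_gen_on E G \<Longrightarrow> q \<in> ideal_gen_on E G \<Longrightarrow> p - q \<in> ideal_gen_on E G"
  by (metis ig_add ig_uminus diff_conv_add_uminus)

definition Gs :: "nat set set \<Rightarrow> (nat set, 'k::field) mpoly set" where
  "Gs E = {g \<in> toric_ideal E. g \<noteq> 0 \<and> total_degree g \<in> {2,3}}"

definition RelM :: "nat set set \<Rightarrow> 'k::field itself \<Rightarrow> nat set multiset \<Rightarrow> nat set multiset \<Rightarrow> bool" where
  "RelM E T M N \<longleftrightarrow> (Poly_Mapping.single (pm M) 1 - Poly_Mapping.single (pm N) 1 :: (nat set, 'k::field) mpoly) \<in> ideal_gen_on E (Gs E)"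

lemma Rel_refl: "RelM E T M M"
  by (simp add: RelM_def ig_zero)

lemma Rel_sym: "RelM E T M N \<Longrightarrow> RelM E T N M"
  unfolding RelM_def by (drule ig_uminus) simp

lemma Rel_trans: "RelM E T M N \<Longrightarrow> RelM E T N K \<Longrightarrow> RelM E T M K"
  unfolding RelM_def by (drule (1) ig_add) simp

lemma Rel_cong: fixes T :: "'k::field itself" shows "RelM E T M N \<Longrightarrow> set_mset C \<subseteq> E \<Longrightarrow> RelM E T (C + M) (C + N)"
  unfolding RelM_def
proof -
  assume a: "(Poly_Mapping.single (pm M) 1 - Poly_Mapping.single (pm N) 1 :: (nat set, 'k) mpoly) \<in> ideal_gen_on E (Gs E)"
    and c: "set_mset C \<subseteq> E"
  have "Poly_Mapping.single (pm C) 1 * (Poly_Mapping.single (pm M) 1 - Poly_Mapping.single (pm N) 1 :: (nat set, 'k) mpoly) \<in> ideal_gen_on E (Gs E)"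
    by (rule ig_mult[OF pr_single a]) (simp add: c)
  then show "(Poly_Mapping.single (pm (C + M)) 1 - Poly_Mapping.single (pm (C + N)) 1 :: (nat set, 'k) mpoly) \<in> ideal_gen_on E (Gs E)"
    by (simp add: right_diff_distrib mult_single pm_add)
qed

lemma keys_bin:
  assumes "x \<noteq> y"
  shows "Poly_Mapping.keys (Poly_Mapping.single x 1 - Poly_Mapping.single y 1 :: ('a \<Rightarrow>\<^sub>0 'k::field)) = {x, y}"
proof -
  have "Poly_Mapping.lookup (Poly_Mapping.single x 1 - Poly_Mapping.single y 1 :: ('a \<Rightarrow>\<^sub>0 'k::field)) z
     = (if z = x then 1 else if z = y then -1 else 0)" for z
    using assms by (simp add: lookup_minus lookup_single when_def)
  then show ?thesis by (auto simp: in_keys_iff split: if_splits)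
qed

lemma total_degree_bin:
  assumes "X \<noteq> Y"
  shows "total_degree (Poly_Mapping.single (pm X) 1 - Poly_Mapping.single (pm Y) 1 :: (nat set, 'k::field) mpoly) = max (size X) (size Y)"
proof -
  have "pm X \<noteq> pm Y" using assms pm_inj by blast
  note k = keys_bin[OF this]
  have s: "(\<Sum>v\<in>Poly_Mapping.keys (pm Z). Poly_Mapping.lookup (pm Z) v) = size Z" for Z :: "nat set multiset"
    by (simp add: size_multiset_overloaded_eq)
  show ?thesis unfolding total_degree_def k image_insert image_empty s by simp
qed

lemma Rel_move:
  fixes T :: "'k::field itself"
  assumes "set_mset X \<subseteq> E" "set_mset Y \<subseteq> E" "Phi X = Phi Y" "size X \<le> 3" "size Y \<le> 3"
    "2 \<le> max (size X) (size Y)"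
  shows "RelM E T X Y"
proof (cases "X = Y")
  case True then show ?thesis by (simp add: Rel_refl)
next
  case False
  let ?g = "Poly_Mapping.single (pm X) 1 - Poly_Mapping.single (pm Y) 1 :: (nat set, 'k::field) mpoly"
  have "?g \<in> poly_ring_on E"
    using assms(1,2) by (intro pr_diff pr_single) auto
  moreover have "hyper_hom ?g = 0"
    using assms(3) by (simp add: hyper_hom_H H_diff psi_def)
  ultimately have "?g \<in> toric_ideal E" by (simp add: toric_ideal_def)
  moreover have "pm X \<noteq> pm Y" using False pm_inj by blast
  then have "Poly_Mapping.keys ?g = {pm X, pm Y}" by (rule keys_bin)
  then have "?g \<noteq> 0" by (metis empty_not_insert keys_zero)
  moreover have td: "total_degree ?g = max (size X) (size Y)" by (rule total_degree_bin[OF False])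
  have "total_degree ?g \<in> {2,3}"
    unfolding td using assms(4-6) by (auto simp: max_def)
  ultimately have "?g \<in> Gs E" by (simp add: Gs_def)
  then show ?thesis unfolding RelM_def by (rule ig_gen)
qed


definition CP :: "nat set set \<Rightarrow> 'k::field itself \<Rightarrow> bool" where
  "CP E T \<longleftrightarrow> (\<forall>M N. set_mset M \<subseteq> E \<longrightarrow> set_mset N \<subseteq> E \<longrightarrow> Phi M = Phi N \<longrightarrow> RelM E T M N)"

lemma toric_sub_J:
  fixes T :: "'k::field itself"
  assumes cp: "CP E T"
  shows "p \<in> toric_ideal E \<Longrightarrow> (p :: (nat set, 'k) mpoly) \<in> ideal_gen_on E (Gs E)"
proof (induction "card (Poly_Mapping.keys p)" arbitrary: p rule: less_induct)
  case less
  show ?case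
  proof (cases "Poly_Mapping.keys p = {}")
    case True
    then have "p = 0" by simp
    then show ?thesis by (simp add: ig_zero)
  next
    case False
    then obtain m0 where m0: "m0 \<in> Poly_Mapping.keys p" by blast
    define c where "c = Poly_Mapping.lookup p m0"
    have c0: "c \<noteq> 0" using m0 by (simp add: c_def in_keys_iff)
    have pr: "p \<in> poly_ring_on E" and H0: "H p = 0"
      using less.prems by (simp_all add: toric_ideal_def hyper_hom_H)
    have "\<exists>m1\<in>Poly_Mapping.keys p. m1 \<noteq> m0 \<and> psi m1 = psi m0"
    proof (rule ccontr)
      assume na: "\<not> ?thesis"
      have "Poly_Mapping.lookup (H p) (psi m0) = (\<Sum>m\<in>Poly_Mapping.keys p. if m = m0 then Poly_Mapping.lookup p m else 0)"
        unfolding H_def lookup_sum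
        by (rule sum.cong) (use na in \<open>auto simp: lookup_single when_def\<close>)
      also have "\<dots> = c" using m0 by (simp add: c_def)
      finally show False using H0 c0 by simp
    qed
    then obtain m1 where m1: "m1 \<in> Poly_Mapping.keys p" "m1 \<noteq> m0" "psi m1 = psi m0" by blast
    define p' where "p' = p + Poly_Mapping.single m1 c + Poly_Mapping.single m0 (-c)"
    have lk: "Poly_Mapping.lookup p' k = Poly_Mapping.lookup p k + (if k = m1 then c else 0) - (if k = m0 then c else 0)" for k
      by (simp add: p'_def lookup_add lookup_single when_def)
    have ksub: "Poly_Mapping.keys p' \<subseteq> Poly_Mapping.keys p - {m0}"
    proof
      fix k assume "k \<in> Poly_Mapping.keys p'"
      then have "Poly_Mapping.lookup p' k \<noteq> 0" by (simp add: in_keys_iff)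
      then show "k \<in> Poly_Mapping.keys p - {m0}"
        using lk[of k] m1 by (auto simp: c_def in_keys_iff split: if_splits)
    qed
    have "Poly_Mapping.keys p' \<subset> Poly_Mapping.keys p" using ksub m0 by blast
    then have lt: "card (Poly_Mapping.keys p') < card (Poly_Mapping.keys p)"
      by (intro psubset_card_mono) simp_all
    have "p' \<in> poly_ring_on E" using pr ksub by (meson Diff_subset order_trans pr_subkeys)
    moreover have "H p' = 0"
      using H0 m1(3) by (simp add: p'_def H_add single_add[symmetric])
    ultimately have "p' \<in> toric_ideal E" by (simp add: toric_ideal_def hyper_hom_H)
    then have J1: "p' \<in> ideal_gen_on E (Gs E)" using less.hyps lt by blast
    have km: "Poly_Mapping.keys m0 \<subseteq> E" "Poly_Mapping.keys m1 \<subseteq> E"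
      using pr m0 m1 unfolding poly_ring_on_def by auto
    have "Phi (msof m0) = Phi (msof m1)" using m1(3) unfolding psi_def by (metis pm_inj)
    then have "RelM E T (msof m0) (msof m1)" using cp km unfolding CP_def by simp
    then have J2: "(Poly_Mapping.single m0 1 - Poly_Mapping.single m1 1 :: (nat set, 'k) mpoly) \<in> ideal_gen_on E (Gs E)"
      unfolding RelM_def by simp
    have "Poly_Mapping.single 0 c * (Poly_Mapping.single m0 1 - Poly_Mapping.single m1 1 :: (nat set, 'k) mpoly) \<in> ideal_gen_on E (Gs E)"
      by (rule ig_mult[OF pr_const J2])
    then have "p' + Poly_Mapping.single 0 c * (Poly_Mapping.single m0 1 - Poly_Mapping.single m1 1) \<in> ideal_gen_on E (Gs E)"
      by (rule ig_add[OF J1])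
    moreover have "p' + Poly_Mapping.single 0 c * (Poly_Mapping.single m0 1 - Poly_Mapping.single m1 1) = p"
      unfolding p'_def by (simp add: right_diff_distrib mult_single single_uminus)
    ultimately show ?thesis by simp
  qed
qed

lemma J_sub_toric:
  shows "(p :: (nat set, 'k::field) mpoly) \<in> ideal_gen_on E (Gs E) \<Longrightarrow> p \<in> toric_ideal E"
proof -
  assume "p \<in> ideal_gen_on E (Gs E)"
  then obtain F c where 1: "finite F" "F \<subseteq> Gs E" "\<forall>g\<in>F. c g \<in> poly_ring_on E" "p = (\<Sum>g\<in>F. c g * g)"
    unfolding ideal_gen_on_def by blast
  have g: "g \<in> poly_ring_on E" "H g = 0" if "g \<in> F" for g
    using 1(2) that by (auto simp: Gs_def toric_ideal_def hyper_hom_H)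
  have "p \<in> poly_ring_on E" unfolding 1(4) using 1(3) g by (intro pr_sum pr_mult) auto
  moreover have "H p = 0" unfolding 1(4) H_sum H_mult using g by simp
  ultimately show ?thesis by (simp add: toric_ideal_def hyper_hom_H)
qed

lemma gen23_of_CP:
  fixes T :: "'k::field itself"
  assumes "CP E T"
  shows "generated_in_degrees_2_3 E (toric_ideal E :: (nat set, 'k) mpoly set)"
  unfolding generated_in_degrees_2_3_def
proof (intro exI[of _ "Gs E"] conjI)
  show "Gs E \<subseteq> poly_ring_on E" by (auto simp: Gs_def toric_ideal_def)
  show "\<forall>g\<in>(Gs E :: (nat set, 'k) mpoly set). g \<noteq> 0 \<and> total_degree g \<in> {2, 3}" by (simp add: Gs_def)
  show "ideal_gen_on E (Gs E) = (toric_ideal E :: (nat set, 'k) mpoly set)"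
    using toric_sub_J[OF assms] J_sub_toric by blast
qed


definition v23 :: "nat set \<Rightarrow> nat set multiset \<Rightarrow> bool" where
  "v23 B M \<longleftrightarrow> (\<forall>e\<in>#M. e \<subseteq> B \<and> 2 \<le> card e \<and> card e \<le> 3)"

definition dg :: "nat set multiset \<Rightarrow> nat \<Rightarrow> nat" where
  "dg M x = size (filter_mset (\<lambda>e. x \<in> e) M)"

definition t3 :: "nat set multiset \<Rightarrow> nat" where
  "t3 M = size (filter_mset (\<lambda>e. card e = 3) M)"

lemma v23_add[simp]: "v23 B (M + N) \<longleftrightarrow> v23 B M \<and> v23 B N"
  by (auto simp: v23_def)

lemma v23_add_mset[simp]: "v23 B (add_mset e M) \<longleftrightarrow> (e \<subseteq> B \<and> 2 \<le> card e \<and> card e \<le> 3) \<and> v23 B M"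
  by (auto simp: v23_def)

lemma v23_empty[simp]: "v23 B {#}"
  by (simp add: v23_def)

lemma v23_sub: "v23 B M \<Longrightarrow> N \<subseteq># M \<Longrightarrow> v23 B N"
  unfolding v23_def by (meson mset_subset_eqD)

lemma dg_add[simp]: "dg (M + N) x = dg M x + dg N x"
  by (simp add: dg_def)

lemma dg_add_mset[simp]: "dg (add_mset e M) x = (if x \<in> e then 1 else 0) + dg M x"
  by (simp add: dg_def)

lemma dg_empty[simp]: "dg {#} x = 0"
  by (simp add: dg_def)

lemma t3_add[simp]: "t3 (M + N) = t3 M + t3 N"
  by (simp add: t3_def)

lemma t3_add_mset[simp]: "t3 (add_mset e M) = (if card e = 3 then 1 else 0) + t3 M"
  by (simp add: t3_def)

lemma t3_empty[simp]: "t3 {#} = 0"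
  by (simp add: t3_def)

lemma count_Phi: "(\<forall>e\<in>#M. finite e) \<Longrightarrow> count (Phi M) x = dg M x"
  by (induction M) auto

lemma v23_count_Phi: "v23 B M \<Longrightarrow> count (Phi M) x = dg M x"
  by (rule count_Phi) (metis v23_def card.infinite not_numeral_le_zero)

lemma size_Phi_add_mset[simp]: "size (Phi (add_mset e M)) = card e + size (Phi M)"
  by simp

lemma size_Phi_ge: "v23 B M \<Longrightarrow> 2 * size M \<le> size (Phi M)"
  by (induction M) auto

lemma ms2: "a \<noteq> b \<Longrightarrow> mset_set {a, b} = {#a, b#}"
  by simp

lemma ms3: "a \<noteq> b \<Longrightarrow> a \<noteq> c \<Longrightarrow> b \<noteq> c \<Longrightarrow> mset_set {a, b, c} = {#a, b, c#}"
  by simp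

lemma card2_obtain: "card e = 2 \<Longrightarrow> v \<in> e \<Longrightarrow> \<exists>y. e = {v, y} \<and> y \<noteq> v"
  unfolding card_2_iff by auto

lemma card3_obtain1: "card e = 3 \<Longrightarrow> v \<in> e \<Longrightarrow> \<exists>a b. e = {v, a, b} \<and> a \<noteq> v \<and> b \<noteq> v \<and> a \<noteq> b"
  unfolding card_3_iff by auto

lemma card3_obtain2: "card e = 3 \<Longrightarrow> v \<in> e \<Longrightarrow> u \<in> e \<Longrightarrow> u \<noteq> v \<Longrightarrow> \<exists>z. e = {v, u, z} \<and> z \<noteq> v \<and> z \<noteq> u"
  unfolding card_3_iff by auto

lemma perm6:
  assumes "a \<noteq> b" "a \<noteq> c" "b \<noteq> c" "x \<noteq> y" "x \<noteq> z" "y \<noteq> z"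
  shows "(a \<noteq> x \<and> b \<noteq> y \<and> c \<noteq> z) \<or> (a \<noteq> y \<and> b \<noteq> z \<and> c \<noteq> x) \<or> (a \<noteq> z \<and> b \<noteq> x \<and> c \<noteq> y)
       \<or> (a \<noteq> x \<and> b \<noteq> z \<and> c \<noteq> y) \<or> (a \<noteq> y \<and> b \<noteq> x \<and> c \<noteq> z) \<or> (a \<noteq> z \<and> b \<noteq> y \<and> c \<noteq> x)"
  using assms by blast

lemma pairing:
  assumes "card f = 3" "card g = 3"
  shows "\<exists>p1 p2 p3. card p1 = 2 \<and> card p2 = 2 \<and> card p3 = 2 \<and> p1 \<union> p2 \<union> p3 \<subseteq> f \<union> g
     \<and> mset_set f + mset_set g = mset_set p1 + mset_set p2 + mset_set p3"
proof -
  obtain a b c where f: "f = {a,b,c}" "a \<noteq> b" "b \<noteq> c" "a \<noteq> c" using assms(1) unfolding card_3_iff by blast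
  obtain x y z where g: "g = {x,y,z}" "x \<noteq> y" "y \<noteq> z" "x \<noteq> z" using assms(2) unfolding card_3_iff by blast
  have mf: "mset_set f = {#a,b,c#}" and mg: "mset_set g = {#x,y,z#}" using f g by simp_all
  have key: "\<exists>x' y' z'. {#x',y',z'#} = {#x,y,z#} \<and> a \<noteq> x' \<and> b \<noteq> y' \<and> c \<noteq> z'"
  proof -
    have "(a \<noteq> x \<and> b \<noteq> y \<and> c \<noteq> z) \<or> (a \<noteq> y \<and> b \<noteq> z \<and> c \<noteq> x) \<or> (a \<noteq> z \<and> b \<noteq> x \<and> c \<noteq> y)
       \<or> (a \<noteq> x \<and> b \<noteq> z \<and> c \<noteq> y) \<or> (a \<noteq> y \<and> b \<noteq> x \<and> c \<noteq> z) \<or> (a \<noteq> z \<and> b \<noteq> y \<and> c \<noteq> x)"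
      using perm6[of a b c x y z] f g by blast
    then show ?thesis
    proof (elim disjE)
      assume "a \<noteq> x \<and> b \<noteq> y \<and> c \<noteq> z" then show ?thesis by (intro exI[of _ x] exI[of _ y] exI[of _ z]) simp
    next
      assume "a \<noteq> y \<and> b \<noteq> z \<and> c \<noteq> x" then show ?thesis by (intro exI[of _ y] exI[of _ z] exI[of _ x]) (simp add: add_mset_commute)
    next
      assume "a \<noteq> z \<and> b \<noteq> x \<and> c \<noteq> y" then show ?thesis by (intro exI[of _ z] exI[of _ x] exI[of _ y]) (simp add: add_mset_commute)
    next
      assume "a \<noteq> x \<and> b \<noteq> z \<and> c \<noteq> y" then show ?thesis by (intro exI[of _ x] exI[of _ z] exI[of _ y]) (simp add: add_mset_commute)
    next
      assume "a \<noteq> y \<and> b \<noteq> x \<and> c \<noteq> z" then show ?thesis by (intro exI[of _ y] exI[of _ x] exI[of _ z]) (simp add: add_mset_commute)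
    next
      assume "a \<noteq> z \<and> b \<noteq> y \<and> c \<noteq> x" then show ?thesis by (intro exI[of _ z] exI[of _ y] exI[of _ x]) (simp add: add_mset_commute)
    qed
  qed
  then obtain x' y' z' where k: "{#x',y',z'#} = {#x,y,z#}" "a \<noteq> x'" "b \<noteq> y'" "c \<noteq> z'" by blast
  have sub: "x' \<in> g" "y' \<in> g" "z' \<in> g" using k(1) g
    by (metis insert_iff set_mset_add_mset_insert set_mset_empty)+
  show ?thesis
  proof (intro exI conjI)
    show "card {a, x'} = 2" "card {b, y'} = 2" "card {c, z'} = 2" using k by simp_all
    show "{a, x'} \<union> {b, y'} \<union> {c, z'} \<subseteq> f \<union> g" using sub f by auto
    show "mset_set f + mset_set g = mset_set {a, x'} + mset_set {b, y'} + mset_set {c, z'}"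
      unfolding mf mg k(1)[symmetric] using k by (simp add: add_mset_commute)
  qed
qed


locale conn =
  fixes B :: "nat set" and E :: "nat set set" and R :: "nat set multiset \<Rightarrow> nat set multiset \<Rightarrow> bool"
  assumes E23: "\<And>e. e \<subseteq> B \<Longrightarrow> 2 \<le> card e \<Longrightarrow> card e \<le> 3 \<Longrightarrow> e \<in> E"
    and refl: "R M M"
    and sym: "R M N \<Longrightarrow> R N M"
    and trans: "R M N \<Longrightarrow> R N K \<Longrightarrow> R M K"
    and cong: "R M N \<Longrightarrow> set_mset C \<subseteq> E \<Longrightarrow> R (C + M) (C + N)"
    and move: "set_mset X \<subseteq> E \<Longrightarrow> set_mset Y \<subseteq> E \<Longrightarrow> Phi X = Phi Y \<Longrightarrow> size X \<le> 3 \<Longrightarrow> size Y \<le> 3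
       \<Longrightarrow> 2 \<le> max (size X) (size Y) \<Longrightarrow> R X Y"
begin

lemma v23_E: "v23 B M \<Longrightarrow> set_mset M \<subseteq> E"
  unfolding v23_def using E23 by blast

lemma replace:
  assumes "v23 B M" "X \<subseteq># M" "v23 B Y" "Phi X = Phi Y" "size X \<le> 3" "size Y \<le> 3" "2 \<le> max (size X) (size Y)"
  shows "R M (Y + (M - X)) \<and> v23 B (Y + (M - X)) \<and> Phi (Y + (M - X)) = Phi M"
proof -
  have M: "M = X + (M - X)" using assms(2) by simp
  have vX: "v23 B X" using assms(1,2) v23_sub by blast
  have vC: "v23 B (M - X)" using assms(1) v23_sub by (metis diff_subset_eq_self)
  have "R X Y" using move[OF v23_E[OF vX] v23_E[OF assms(3)] assms(4-7)] .
  then have "R ((M - X) + X) ((M - X) + Y)" using cong v23_E[OF vC] by blast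
  then have "R M (Y + (M - X))" using M by (simp add: add.commute)
  moreover have "Phi (Y + (M - X)) = Phi M" using M assms(4) by (metis Phi_add)
  ultimately show ?thesis using assms(3) vC by simp
qed

lemma normalize:
  "v23 B M \<Longrightarrow> \<exists>M'. v23 B M' \<and> Phi M' = Phi M \<and> R M M' \<and> t3 M' \<le> 1"
proof (induction "t3 M" arbitrary: M rule: less_induct)
  case less
  show ?case
  proof (cases "t3 M \<le> 1")
    case True then show ?thesis using less.prems refl by blast
  next
    case False
    define F where "F = filter_mset (\<lambda>e. card e = 3) M"
    have sF: "size F \<ge> 2" using False by (simp add: F_def t3_def)
    then obtain f where f: "f \<in># F" by (metis multiset_nonemptyE not_numeral_le_zero size_empty)
    have "size (F - {#f#}) \<ge> 1" using sF f by (simp add: size_Diff_submset)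
    then obtain g where g: "g \<in># F - {#f#}" by (metis multiset_nonemptyE not_one_le_zero size_empty)
    have XF: "{#f, g#} \<subseteq># F" using f g by (simp add: insert_subset_eq_iff)
    have XM: "{#f, g#} \<subseteq># M" using XF unfolding F_def by (meson multiset_filter_subset subset_mset.trans)
    have "g \<in># F" using g by (meson in_diffD)
    then have cf: "card f = 3" and cg: "card g = 3" using f unfolding F_def by auto
    have "f \<in># M" "g \<in># M" using XM by (auto dest: mset_subset_eqD)
    then have fB: "f \<subseteq> B" and gB: "g \<subseteq> B" using less.prems unfolding v23_def by auto
    obtain p1 p2 p3 where p: "card p1 = 2" "card p2 = 2" "card p3 = 2" "p1 \<union> p2 \<union> p3 \<subseteq> f \<union> g"
      "mset_set f + mset_set g = mset_set p1 + mset_set p2 + mset_set p3"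
      using pairing[OF cf cg] by blast
    define Y where "Y = {#p1, p2, p3#}"
    have vY: "v23 B Y" using p fB gB unfolding Y_def v23_def by auto
    have PY: "Phi {#f, g#} = Phi Y" using p(5) unfolding Y_def by (simp add: add.assoc)
    obtain r where r: "R M (Y + (M - {#f, g#}))" "v23 B (Y + (M - {#f, g#}))" "Phi (Y + (M - {#f, g#})) = Phi M"
      using replace[OF less.prems XM vY PY] by (simp add: Y_def)
    have "t3 M = t3 {#f, g#} + t3 (M - {#f, g#})" using XM
      by (metis subset_mset.add_diff_inverse t3_add)
    then have "t3 (Y + (M - {#f, g#})) < t3 M" using cf cg p by (simp add: Y_def)
    then obtain M' where "v23 B M'" "Phi M' = Phi (Y + (M - {#f, g#}))" "R (Y + (M - {#f, g#})) M'" "t3 M' \<le> 1"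
      using less.hyps[OF _ r(2)] by blast
    then show ?thesis using r trans by metis
  qed
qed

end


lemma sub2: "a \<in># M \<Longrightarrow> b \<in># M \<Longrightarrow> a \<noteq> b \<Longrightarrow> {#a, b#} \<subseteq># M"
  by (simp add: insert_subset_eq_iff in_diff_count)

lemma sub3: "a \<in># M \<Longrightarrow> b \<in># M \<Longrightarrow> c \<in># M \<Longrightarrow> a \<noteq> b \<Longrightarrow> a \<noteq> c \<Longrightarrow> b \<noteq> c \<Longrightarrow> {#a, b, c#} \<subseteq># M"
  by (simp add: insert_subset_eq_iff in_diff_count)

lemma dg_mono: "X \<subseteq># M \<Longrightarrow> dg X x \<le> dg M x"
  by (metis dg_add le_add1 subset_mset.add_diff_inverse)

lemma dg2: "a \<in># M \<Longrightarrow> b \<in># M \<Longrightarrow> a \<noteq> b \<Longrightarrow> x \<in> a \<Longrightarrow> x \<in> b \<Longrightarrow> 2 \<le> dg M x"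
  using dg_mono[OF sub2, of a M b x] by simp

lemma dg_pos: "1 \<le> dg M x \<Longrightarrow> \<exists>e\<in>#M. x \<in> e"
  unfolding dg_def by (metis filter_mset_eq_mempty_iff not_one_le_zero size_empty)

lemma dg_count3:
  "(\<forall>e\<in>#P. v \<in> e \<longrightarrow> y \<in> e) \<Longrightarrow> (\<forall>e\<in>#P. u \<in> e \<longrightarrow> y \<in> e) \<Longrightarrow> (\<forall>e\<in>#P. \<not> (v \<in> e \<and> u \<in> e))
   \<Longrightarrow> dg P v + dg P u \<le> dg P y"
  by (induction P) auto

lemma dg_le_size: "dg M x \<le> size M"
  unfolding dg_def by (rule size_filter_mset_lesseq)

lemma size1_single: "size F \<le> 1 \<Longrightarrow> f \<in># F \<Longrightarrow> F = {#f#}"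
proof -
  assume a: "size F \<le> 1" "f \<in># F"
  then have "size (F - {#f#}) = 0" by (simp add: size_Diff_singleton)
  then have "F - {#f#} = {#}" by simp
  then show ?thesis using a(2) by (metis insert_DiffM)
qed

context conn begin

lemma finish:
  assumes "v23 B M" "X \<subseteq># M" "v23 B Y" "Phi X = Phi Y" "size X \<le> 3" "size Y \<le> 3"
    "2 \<le> max (size X) (size Y)" "{v,u} \<in># Y"
  shows "\<exists>M'. v23 B M' \<and> Phi M' = Phi M \<and> R M M' \<and> {v,u} \<in># M'"
  using replace[OF assms(1-7)] assms(8) by (intro exI[of _ "Y + (M - X)"]) simp


lemma step:
  assumes vM: "v23 B M" and t: "t3 M \<le> 1" and sz: "4 \<le> size (Phi M)" and uv: "u \<noteq> v"
    and du: "1 \<le> dg M u" and mx: "\<And>x. dg M x \<le> dg M v" and mx2: "\<And>x. x \<noteq> v \<Longrightarrow> dg M x \<le> dg M u"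
  shows "\<exists>M'. v23 B M' \<and> Phi M' = Phi M \<and> R M M' \<and> {v,u} \<in># M'"
proof (cases "{v,u} \<in># M")
  case True then show ?thesis using vM refl by blast
next
  case nvu: False
  define P where "P = filter_mset (\<lambda>e. card e = 2) M"
  define F where "F = filter_mset (\<lambda>e. card e = 3) M"
  have MPF: "M = P + F"
  proof -
    have "M = filter_mset (\<lambda>e. card e = 2) M + filter_mset (\<lambda>e. \<not> card e = 2) M"
      by (simp add: multiset_partition)
    also have "filter_mset (\<lambda>e. \<not> card e = 2) M = F"
      unfolding F_def using vM unfolding v23_def by (intro filter_mset_cong) auto
    finally show ?thesis by (simp add: P_def)
  qed
  have dgM: "dg M x = dg P x + dg F x" for x using MPF by simp
  have sF: "size F \<le> 1" using t by (simp add: t3_def F_def)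
  have dgF: "dg F x \<le> 1" for x using dg_le_size[of F x] sF by simp
  have PM: "e \<in># P \<Longrightarrow> e \<in># M" for e by (simp add: P_def)
  have FM: "e \<in># F \<Longrightarrow> e \<in># M" for e by (simp add: F_def)
  have P2: "e \<in># P \<Longrightarrow> card e = 2" for e by (simp add: P_def)
  have F3: "e \<in># F \<Longrightarrow> card e = 3" for e by (simp add: F_def)
  have MB: "e \<in># M \<Longrightarrow> e \<subseteq> B" for e using vM by (simp add: v23_def)
  have Fsing: "f \<in># F \<Longrightarrow> F = {#f#}" for f using size1_single[OF sF] .
  have dgv1: "1 \<le> dg M v" using du mx[of u] by simp
  show ?thesis
  proof (cases "dg P v = 0")
    case PV0: True
    have dFv: "dg F v = 1" using dgv1 dgM[of v] dgF[of v] PV0 by simp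
    then obtain f where f: "f \<in># F" "v \<in> f" using dg_pos[of F v] by auto
    have Ff: "F = {#f#}" using Fsing[OF f(1)] .
    have le1: "dg M x \<le> 1" for x using mx[of x] dgM[of v] PV0 dFv by simp
    have cf: "card f = 3" using F3 f(1) .
    have fM: "f \<in># M" using FM f(1) .
    show ?thesis
    proof (cases "u \<in> f")
      case True
      obtain z where z: "f = {v,u,z}" "z \<noteq> v" "z \<noteq> u" using card3_obtain2[OF cf f(2) True uv] by blast
      have "size (Phi M) = size (Phi P) + 3" using MPF Ff cf by simp
      then have "P \<noteq> {#}" using sz by auto
      then obtain C0 where C0: "C0 \<in># P" by blast
      obtain x w where xw: "C0 = {x, w}" "x \<noteq> w" using P2[OF C0] unfolding card_2_iff by blast
      have C0M: "C0 \<in># M" using PM C0 .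
      have fC: "f \<noteq> C0" using cf P2[OF C0] by auto
      have zC: "z \<notin> C0" using dg2[OF fM C0M fC, of z] le1[of z] z(1) by auto
      show ?thesis
      proof (rule finish[OF vM sub2[OF fM C0M fC], of "{#{v,u}, {z,x,w}#}"])
        show "v23 B {#{v, u}, {z, x, w}#}" using MB[OF fM] MB[OF C0M] z xw zC uv by auto
        show "Phi {#f, C0#} = Phi {#{v, u}, {z, x, w}#}" using z xw zC uv
          by (simp add: add_mset_commute)
      qed simp_all
    next
      case False
      have "dg F u = 0" using Ff False by simp
      then have "1 \<le> dg P u" using du dgM[of u] by simp
      then obtain C0 where C0: "C0 \<in># P" "u \<in> C0" using dg_pos[of P u] by auto
      obtain x where x: "C0 = {u, x}" "x \<noteq> u" using card2_obtain[OF P2[OF C0(1)] C0(2)] by blast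
      obtain a b where ab: "f = {v,a,b}" "a \<noteq> v" "b \<noteq> v" "a \<noteq> b" using card3_obtain1[OF cf f(2)] by blast
      have C0M: "C0 \<in># M" using PM C0(1) .
      have fC: "f \<noteq> C0" using cf P2[OF C0(1)] by auto
      have xf: "x \<notin> f" using dg2[OF fM C0M fC, of x] le1[of x] x(1) by auto
      show ?thesis
      proof (rule finish[OF vM sub2[OF fM C0M fC], of "{#{v,u}, {a,b,x}#}"])
        show "v23 B {#{v, u}, {a, b, x}#}" using MB[OF fM] MB[OF C0M] ab x xf uv False by auto
        show "Phi {#f, C0#} = Phi {#{v, u}, {a, b, x}#}" using ab x xf uv False not_sym[of x a] not_sym[of x b]
          by (simp add: add_mset_commute)
      qed simp_all
    qed
  next
    case PV1: False
    show ?thesis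
    proof (cases "dg P u = 0")
      case PU0: True
      have dFu: "dg F u = 1" using du dgM[of u] dgF[of u] PU0 by simp
      then obtain f where f: "f \<in># F" "u \<in> f" using dg_pos[of F u] by auto
      have Ff: "F = {#f#}" using Fsing[OF f(1)] .
      have le1: "x \<noteq> v \<Longrightarrow> dg M x \<le> 1" for x using mx2[of x] dgM[of u] PU0 dFu by simp
      have cf: "card f = 3" using F3 f(1) .
      have fM: "f \<in># M" using FM f(1) .
      obtain C0 where C0: "C0 \<in># P" "v \<in> C0" using dg_pos[of P v] PV1 by auto
      obtain y where y: "C0 = {v, y}" "y \<noteq> v" using card2_obtain[OF P2[OF C0(1)] C0(2)] by blast
      have C0M: "C0 \<in># M" using PM C0(1) .
      have fC: "f \<noteq> C0" using cf P2[OF C0(1)] by auto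
      have yf: "y \<notin> f" using dg2[OF fM C0M fC, of y] le1[OF y(2)] y(1) by auto
      show ?thesis
      proof (cases "v \<in> f")
        case True
        obtain b where b: "f = {u,v,b}" "b \<noteq> u" "b \<noteq> v" using card3_obtain2[OF cf f(2) True uv[symmetric]] by blast
        show ?thesis
        proof (rule finish[OF vM sub2[OF fM C0M fC], of "{#{v,u}, {v,b,y}#}"])
          show "v23 B {#{v, u}, {v, b, y}#}" using MB[OF fM] MB[OF C0M] b y yf uv by auto
          show "Phi {#f, C0#} = Phi {#{v, u}, {v, b, y}#}" using b y yf uv not_sym[of y b] not_sym[of b v] not_sym[of y v]
            by (simp add: add_mset_commute)
        qed simp_all
      next
        case False
        obtain a b where ab: "f = {u,a,b}" "a \<noteq> u" "b \<noteq> u" "a \<noteq> b" using card3_obtain1[OF cf f(2)] by blast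
        show ?thesis
        proof (rule finish[OF vM sub2[OF fM C0M fC], of "{#{v,u}, {a,b,y}#}"])
          show "v23 B {#{v, u}, {a, b, y}#}" using MB[OF fM] MB[OF C0M] ab y yf uv False by auto
          show "Phi {#f, C0#} = Phi {#{v, u}, {a, b, y}#}" using ab y yf uv False not_sym[of y a] not_sym[of y b]
            by (simp add: add_mset_commute)
        qed simp_all
      qed
    next
      case PU1: False
      obtain e1 where e1: "e1 \<in># P" "v \<in> e1" using dg_pos[of P v] PV1 by auto
      obtain y0 where y0: "e1 = {v, y0}" "y0 \<noteq> v" using card2_obtain[OF P2[OF e1(1)] e1(2)] by blast
      obtain e2 where e2: "e2 \<in># P" "u \<in> e2" using dg_pos[of P u] PU1 by auto
      obtain x0 where x0: "e2 = {u, x0}" "x0 \<noteq> u" using card2_obtain[OF P2[OF e2(1)] e2(2)] by blast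
      show ?thesis
      proof (cases "\<exists>y x. {v,y} \<in># P \<and> {u,x} \<in># P \<and> y \<noteq> v \<and> x \<noteq> u \<and> x \<noteq> y")
        case True
        then obtain y x where yx: "{v,y} \<in># P" "{u,x} \<in># P" "y \<noteq> v" "x \<noteq> u" "x \<noteq> y" by blast
        have yM: "{v,y} \<in># M" and xM: "{u,x} \<in># M" using yx PM by auto
        have yu: "y \<noteq> u" using yM nvu by auto
        have xv: "x \<noteq> v" using xM nvu by (auto simp: insert_commute)
        have ne: "{v,y} \<noteq> {u,x}" using uv yu by (auto simp: doubleton_eq_iff)
        show ?thesis
        proof (rule finish[OF vM sub2[OF yM xM ne], of "{#{v,u}, {y,x}#}"])
          show "v23 B {#{v, u}, {y, x}#}" using MB[OF yM] MB[OF xM] yx uv by auto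
          show "Phi {#{v, y}, {u, x}#} = Phi {#{v, u}, {y, x}#}" using yx uv yu xv
            by (simp add: add_mset_commute)
        qed simp_all
      next
        case False
        have x0y0: "x0 = y0" using False e1 e2 y0 x0 by blast
        have hv: "\<forall>e\<in>#P. v \<in> e \<longrightarrow> y0 \<in> e"
        proof (intro ballI impI)
          fix e assume "e \<in># P" "v \<in> e"
          then obtain y' where "e = {v, y'}" "y' \<noteq> v" using card2_obtain[OF P2[OF \<open>e \<in># P\<close>] \<open>v \<in> e\<close>] by blast
          then show "y0 \<in> e" using False e2 x0 x0y0 \<open>e \<in># P\<close> by blast
        qed
        have hu: "\<forall>e\<in>#P. u \<in> e \<longrightarrow> y0 \<in> e"
        proof (intro ballI impI)
          fix e assume "e \<in># P" "u \<in> e"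
          then obtain x' where "e = {u, x'}" "x' \<noteq> u" using card2_obtain[OF P2[OF \<open>e \<in># P\<close>] \<open>u \<in> e\<close>] by blast
          then show "y0 \<in> e" using False e1 y0 \<open>e \<in># P\<close> by blast
        qed
        have hvu: "\<forall>e\<in>#P. \<not> (v \<in> e \<and> u \<in> e)"
        proof (intro ballI notI)
          fix e assume "e \<in># P" "v \<in> e \<and> u \<in> e"
          then obtain y' where "e = {v, y'}" "y' \<noteq> v" using card2_obtain[OF P2[OF \<open>e \<in># P\<close>]] by blast
          then have "e = {v,u}" using \<open>v \<in> e \<and> u \<in> e\<close> uv by auto
          then show False using nvu PM \<open>e \<in># P\<close> by blast
        qed
        have cnt: "dg P v + dg P u \<le> dg P y0" using dg_count3[OF hv hu hvu] .
        have y0u: "y0 \<noteq> u" using x0 x0y0 by simp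
        have A1: "dg M y0 \<le> dg M v" using mx .
        have A2: "dg M y0 \<le> dg M u" using mx2 y0(2) .
        have "dg F v = 1 \<and> dg F u = 1 \<and> dg F y0 = 0"
          using A1 A2 cnt dgM[of y0] dgM[of v] dgM[of u] dgF[of v] dgF[of u] dgF[of y0] PV1 PU1
          by linarith
        then have dFv: "dg F v = 1" and dFu: "dg F u = 1" and dFy: "dg F y0 = 0" by auto
        obtain f where f: "f \<in># F" "v \<in> f" using dg_pos[of F v] dFv by auto
        have Ff: "F = {#f#}" using Fsing[OF f(1)] .
        have uf: "u \<in> f" using dFu Ff by (auto split: if_splits)
        have yf: "y0 \<notin> f" using dFy Ff by (auto split: if_splits)
        have cf: "card f = 3" using F3 f(1) .
        have fM: "f \<in># M" using FM f(1) .
        obtain z where z: "f = {v,u,z}" "z \<noteq> v" "z \<noteq> u" using card3_obtain2[OF cf f(2) uf uv] by blast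
        have zy: "z \<noteq> y0" using yf z by auto
        have e1M: "{v,y0} \<in># M" and e2M: "{u,y0} \<in># M" using e1 e2 y0 x0 x0y0 PM by auto
        have n1: "f \<noteq> {v,y0}" using cf y0 by auto
        have n2: "f \<noteq> {u,y0}" using cf y0u by auto
        have n3: "{v,y0} \<noteq> {u,y0}" using uv y0u by (auto simp: doubleton_eq_iff)
        show ?thesis
        proof (rule finish[OF vM sub3[OF fM e1M e2M n1 n2 n3], of "{#{v,u}, {v,u,y0}, {y0,z}#}"])
          show "v23 B {#{v, u}, {v, u, y0}, {y0, z}#}" using MB[OF fM] MB[OF e1M] MB[OF e2M] z uv y0 y0u zy by auto
          show "Phi {#f, {v, y0}, {u, y0}#} = Phi {#{v, u}, {v, u, y0}, {y0, z}#}" using z uv y0 y0u zy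
            by (simp add: add_mset_commute)
        qed simp_all
      qed
    qed
  qed
qed

end


lemma exists_max:
  fixes f :: "nat \<Rightarrow> nat"
  assumes "finite S" "S \<noteq> {}"
  shows "\<exists>v\<in>S. \<forall>x\<in>S. f x \<le> f v"
proof -
  have "Max (f ` S) \<in> f ` S" using assms by simp
  then obtain v where v: "v \<in> S" "f v = Max (f ` S)" by auto
  have "\<forall>x\<in>S. f x \<le> Max (f ` S)" using assms by simp
  then show ?thesis using v by (intro bexI[of _ v]) simp_all
qed

lemma v23_fin: "v23 B M \<Longrightarrow> e \<in># M \<Longrightarrow> finite e \<and> 2 \<le> card e"
proof -
  assume "v23 B M" "e \<in># M"
  then have c: "2 \<le> card e" by (simp add: v23_def)
  then have "card e > 0" by simp
  then have "finite e" by (rule card_ge_0_finite)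
  then show ?thesis using c by simp
qed

lemma v23_Phi_empty:
  assumes a: "v23 B N" "Phi N = {#}"
  shows "N = {#}"
proof (rule ccontr)
  assume "N \<noteq> {#}"
  then obtain x where x: "x \<in># N" by blast
  then have "finite x" "2 \<le> card x" using v23_fin[OF a(1) x] by auto
  then have "x \<noteq> {}" by auto
  then obtain y where "y \<in> x" by blast
  have "count (Phi N) y = dg N y" by (rule v23_count_Phi[OF a(1)])
  also have "\<dots> \<ge> 1" using dg_mono[of "{#x#}" N y] x \<open>y \<in> x\<close> by simp
  finally show False using a(2) by simp
qed

lemma dg_ge1: "e \<in># M \<Longrightarrow> x \<in> e \<Longrightarrow> 1 \<le> dg M x"
  using dg_mono[of "{#e#}" M x] by simp

context conn begin

lemma small_unique:
  assumes "v23 B M" "v23 B N" "Phi M = Phi N" "size (Phi M) \<le> 3"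
  shows "M = N"
proof -
  have sM: "size M \<le> 1" using size_Phi_ge[OF assms(1)] assms(4) by simp
  have sN: "size N \<le> 1" using size_Phi_ge[OF assms(2)] assms(3,4) by simp
  show ?thesis
  proof (cases "M = {#}")
    case True
    then have "Phi N = {#}" using assms(3) by simp
    then have "N = {#}" using assms(2) v23_Phi_empty by blast
    then show ?thesis using True by simp
  next
    case False
    then obtain e where e: "e \<in># M" by blast
    then have Me: "M = {#e#}" using size1_single[OF sM] by blast
    have fe: "finite e" "2 \<le> card e" using v23_fin[OF assms(1) e] by auto
    have "Phi N \<noteq> {#}" using v23_Phi_empty[OF assms(1)] Me assms(3) by auto
    then have "N \<noteq> {#}" by auto
    then obtain e' where e': "e' \<in># N" by blast
    then have Ne: "N = {#e'#}" using size1_single[OF sN] by blast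
    have "finite e'" using v23_fin[OF assms(2) e'] by auto
    moreover have "mset_set e = mset_set e'" using assms(3) Me Ne by simp
    ultimately have "e = e'" using fe by (metis finite_set_mset_mset_set)
    then show ?thesis using Me Ne by simp
  qed
qed

theorem conn23:
  "v23 B M \<Longrightarrow> v23 B N \<Longrightarrow> Phi M = Phi N \<Longrightarrow> R M N"
proof (induction "size (Phi M)" arbitrary: M N rule: less_induct)
  case less
  show ?case
  proof (cases "size (Phi M) \<le> 3")
    case True
    then show ?thesis using small_unique[OF less.prems] refl by simp
  next
    case False
    define D where "D = Phi M"
    have cD: "count D x = dg M x" for x using v23_count_Phi[OF less.prems(1)] by (simp add: D_def)
    have cDN: "count D x = dg N x" for x using v23_count_Phi[OF less.prems(2)] less.prems(3) by (simp add: D_def)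
    have "M \<noteq> {#}" using False by auto
    then obtain e where e: "e \<in># M" by blast
    have ce: "2 \<le> card e" "finite e" using v23_fin[OF less.prems(1) e] by auto
    then obtain w where w: "w \<in> e" by fastforce
    have "1 \<le> count D w" using dg_ge1[OF e w] cD by simp
    then have "set_mset D \<noteq> {}" by (metis count_eq_zero_iff empty_iff not_one_le_zero)
    then obtain v where v: "v \<in> set_mset D" "\<forall>x\<in>set_mset D. count D x \<le> count D v"
      using exists_max[of "set_mset D" "count D"] by auto
    have mxv: "count D x \<le> count D v" for x using v by (cases "x \<in># D") (auto simp: not_in_iff)
    obtain w2 where w2: "w2 \<in> e" "w2 \<noteq> v"
    proof -
      have "\<not> e \<subseteq> {v}" using ce card_mono[of "{v}" e] by auto
      then show ?thesis using that by blast
    qed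
    have "1 \<le> count D w2" using dg_ge1[OF e w2(1)] cD by simp
    then have "w2 \<in># D" by (metis count_eq_zero_iff not_one_le_zero)
    then have "set_mset D - {v} \<noteq> {}" using w2 by blast
    then obtain u where u: "u \<in> set_mset D - {v}" "\<forall>x\<in>set_mset D - {v}. count D x \<le> count D u"
      using exists_max[of "set_mset D - {v}" "count D"] by auto
    have mxu: "x \<noteq> v \<Longrightarrow> count D x \<le> count D u" for x using u by (cases "x \<in># D") (auto simp: not_in_iff)
    have u1: "1 \<le> count D u" using u by (simp add: Suc_le_eq)
    have uv: "u \<noteq> v" using u by simp
    obtain M1 where M1: "v23 B M1" "Phi M1 = Phi M" "R M M1" "t3 M1 \<le> 1" using normalize[OF less.prems(1)] by blast
    obtain N1 where N1: "v23 B N1" "Phi N1 = Phi N" "R N N1" "t3 N1 \<le> 1" using normalize[OF less.prems(2)] by blast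
    have dM1: "dg M1 x = count D x" for x using v23_count_Phi[OF M1(1)] M1(2) by (simp add: D_def)
    have dN1: "dg N1 x = count D x" for x using v23_count_Phi[OF N1(1)] N1(2) less.prems(3) by (simp add: D_def)
    obtain M2 where M2: "v23 B M2" "Phi M2 = Phi M1" "R M1 M2" "{v,u} \<in># M2"
      using step[OF M1(1) M1(4) _ uv] False M1(2) u1 mxv mxu dM1 by auto
    obtain N2 where N2: "v23 B N2" "Phi N2 = Phi N1" "R N1 N2" "{v,u} \<in># N2"
      using step[OF N1(1) N1(4) _ uv] False N1(2) less.prems(3) u1 mxv mxu dN1 by auto
    define M3 where "M3 = M2 - {#{v,u}#}"
    define N3 where "N3 = N2 - {#{v,u}#}"
    have M23: "M2 = add_mset {v,u} M3" using M2(4) by (simp add: M3_def)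
    have N23: "N2 = add_mset {v,u} N3" using N2(4) by (simp add: N3_def)
    have vM3: "v23 B M3" and vN3: "v23 B N3" using M2(1) N2(1) M23 N23 by auto
    have PM3: "Phi M2 = mset_set {v,u} + Phi M3" and PN3: "Phi N2 = mset_set {v,u} + Phi N3"
      using M23 N23 by simp_all
    have eq: "Phi M3 = Phi N3" using PM3 PN3 M2(2) N2(2) M1(2) N1(2) less.prems(3) by simp
    have "size (Phi M3) < size (Phi M)" using PM3 M2(2) M1(2) uv by simp
    then have R3: "R M3 N3" using less.hyps vM3 vN3 eq by blast
    have "v23 B {#{v,u}#}" using M2(1) M23 by simp
    then have "set_mset {#{v,u}#} \<subseteq> E" by (rule v23_E)
    then have "R ({#{v,u}#} + M3) ({#{v,u}#} + N3)" using cong R3 by blast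
    then have "R M2 N2" using M23 N23 by simp
    then show ?thesis using M1(3) M2(3) N1(3) N2(3) trans sym by metis
  qed
qed

end


context conn begin

lemma split_block:
  assumes E2: "\<And>e. e \<subseteq> B \<Longrightarrow> 2 \<le> card e \<Longrightarrow> e \<in> E"
  shows "e \<subseteq> B \<Longrightarrow> 2 \<le> card e \<Longrightarrow> \<exists>X. v23 B X \<and> Phi X = mset_set e \<and> R {#e#} X"
proof (induction "card e" arbitrary: e rule: less_induct)
  case less
  show ?case
  proof (cases "card e \<le> 3")
    case True
    then show ?thesis using less.prems refl by (intro exI[of _ "{#e#}"]) simp
  next
    case False
    have fin: "finite e" using less.prems(2) by (metis card.infinite not_numeral_le_zero)
    obtain a where a: "a \<in> e" using less.prems(2) by fastforce
    have "card (e - {a}) \<ge> 1" using False fin a by simp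
    then have "e - {a} \<noteq> {}" by (metis card.empty not_one_le_zero)
    then obtain b where b: "b \<in> e - {a}" by blast
    define e' where "e' = e - {a,b}"
    have ab: "a \<noteq> b" "{a,b} \<subseteq> e" using a b by auto
    have ce': "card e' = card e - 2" unfolding e'_def using fin ab by (simp add: card_Diff_subset)
    have e'B: "e' \<subseteq> B" using less.prems(1) by (auto simp: e'_def)
    have lt: "card e' < card e" and c2: "2 \<le> card e'" using ce' False by auto
    obtain X' where X': "v23 B X'" "Phi X' = mset_set e'" "R {#e'#} X'"
      using less.hyps[OF lt e'B c2] by blast
    have abB: "{a,b} \<subseteq> B" using ab less.prems(1) by auto
    have eu: "e = {a,b} \<union> e'" using ab by (auto simp: e'_def)
    have me: "mset_set e = mset_set {a,b} + mset_set e'"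
      unfolding eu by (rule mset_set_Union) (use fin in \<open>auto simp: e'_def\<close>)
    have r1: "R {#e#} {#{a,b}, e'#}"
    proof (rule move)
      show "set_mset {#e#} \<subseteq> E" using E2 less.prems by simp
      show "set_mset {#{a, b}, e'#} \<subseteq> E" using E2 abB ab e'B ce' False by auto
      show "Phi {#e#} = Phi {#{a, b}, e'#}" using me by simp
    qed simp_all
    have "R ({#{a,b}#} + {#e'#}) ({#{a,b}#} + X')"
      by (rule cong[OF X'(3)]) (use E2 abB ab in auto)
    then have r2: "R {#{a,b}, e'#} ({#{a,b}#} + X')" by (simp add: add_mset_commute)
    show ?thesis
    proof (intro exI conjI)
      show "v23 B ({#{a,b}#} + X')" using X'(1) abB ab by simp
      show "Phi ({#{a,b}#} + X') = mset_set e" using X'(2) me by simp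
      show "R {#e#} ({#{a,b}#} + X')" using r1 r2 trans by blast
    qed
  qed
qed

lemma split_all:
  assumes E2: "\<And>e. e \<subseteq> B \<Longrightarrow> 2 \<le> card e \<Longrightarrow> e \<in> E"
  shows "(\<forall>e\<in>#M. e \<subseteq> B \<and> 2 \<le> card e) \<Longrightarrow> \<exists>X. v23 B X \<and> Phi X = Phi M \<and> R M X"
proof (induction M)
  case empty
  then show ?case using refl by (intro exI[of _ "{#}"]) simp
next
  case (add e M)
  obtain XM where XM: "v23 B XM" "Phi XM = Phi M" "R M XM" using add by auto
  have "e \<subseteq> B" "2 \<le> card e" using add.prems by auto
  then obtain Xe where Xe: "v23 B Xe" "Phi Xe = mset_set e" "R {#e#} Xe"
    using split_block[OF E2] by blast
  have ME: "set_mset M \<subseteq> E" using add.prems E2 by auto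
  have "R (M + {#e#}) (M + Xe)" by (rule cong[OF Xe(3) ME])
  then have r1: "R (add_mset e M) (Xe + M)" by (simp add: add.commute)
  have r2: "R (Xe + M) (Xe + XM)" by (rule cong[OF XM(3) v23_E[OF Xe(1)]])
  show ?case
  proof (intro exI conjI)
    show "v23 B (Xe + XM)" using Xe XM by simp
    show "Phi (Xe + XM) = Phi (add_mset e M)" using Xe XM by simp
    show "R (add_mset e M) (Xe + XM)" using r1 r2 trans by blast
  qed
qed

lemma conn2:
  assumes E2: "\<And>e. e \<subseteq> B \<Longrightarrow> 2 \<le> card e \<Longrightarrow> e \<in> E"
    and M: "\<forall>e\<in>#M. e \<subseteq> B \<and> 2 \<le> card e" and N: "\<forall>e\<in>#N. e \<subseteq> B \<and> 2 \<le> card e"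
    and eq: "Phi M = Phi N"
  shows "R M N"
proof -
  obtain X where X: "v23 B X" "Phi X = Phi M" "R M X" using split_all[OF E2 M] by blast
  obtain Y where Y: "v23 B Y" "Phi Y = Phi N" "R N Y" using split_all[OF E2 N] by blast
  have "R X Y" using conn23[OF X(1) Y(1)] X(2) Y(2) eq by simp
  then show ?thesis using X(3) Y(3) trans sym by blast
qed

end

lemma conn_RelM:
  fixes T :: "'k::field itself"
  assumes "\<And>e. e \<subseteq> B \<Longrightarrow> 2 \<le> card e \<Longrightarrow> card e \<le> 3 \<Longrightarrow> e \<in> E"
  shows "conn B E (RelM E T)"
proof
  show "\<And>e. e \<subseteq> B \<Longrightarrow> 2 \<le> card e \<Longrightarrow> card e \<le> 3 \<Longrightarrow> e \<in> E" by (rule assms)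
  show "\<And>M. RelM E T M M" by (rule Rel_refl)
  show "\<And>M N. RelM E T M N \<Longrightarrow> RelM E T N M" by (rule Rel_sym)
  show "\<And>M N K. RelM E T M N \<Longrightarrow> RelM E T N K \<Longrightarrow> RelM E T M K" by (rule Rel_trans)
  show "\<And>M N C. RelM E T M N \<Longrightarrow> set_mset C \<subseteq> E \<Longrightarrow> RelM E T (C + M) (C + N)" by (rule Rel_cong)
  show "\<And>X Y. set_mset X \<subseteq> E \<Longrightarrow> set_mset Y \<subseteq> E \<Longrightarrow> Phi X = Phi Y \<Longrightarrow> size X \<le> 3 \<Longrightarrow> size Y \<le> 3
       \<Longrightarrow> 2 \<le> max (size X) (size Y) \<Longrightarrow> RelM E T X Y" by (rule Rel_move)
qed

lemma CP1:
  fixes T :: "'k::field itself"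
  shows "CP {e. e \<subseteq> {1..n} \<and> 2 \<le> card e \<and> card e \<le> 3} T"
proof -
  let ?E = "{e. e \<subseteq> {1..n} \<and> 2 \<le> card e \<and> card e \<le> 3}"
  interpret c: conn "{1..n}" ?E "RelM ?E T" by (rule conn_RelM) simp
  show ?thesis unfolding CP_def
  proof (intro allI impI)
    fix M N assume "set_mset M \<subseteq> ?E" "set_mset N \<subseteq> ?E" "Phi M = Phi N"
    moreover have "v23 {1..n} M" "v23 {1..n} N" using calculation by (auto simp: v23_def)
    ultimately show "RelM ?E T M N" using c.conn23 by blast
  qed
qed

lemma CP2:
  fixes T :: "'k::field itself"
  shows "CP {e. e \<subseteq> {1..n} \<and> 2 \<le> card e} T"
proof -
  let ?E = "{e. e \<subseteq> {1..n} \<and> 2 \<le> card e}"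
  interpret c: conn "{1..n}" ?E "RelM ?E T" by (rule conn_RelM) simp
  show ?thesis unfolding CP_def
  proof (intro allI impI)
    fix M N assume a: "set_mset M \<subseteq> ?E" "set_mset N \<subseteq> ?E" "Phi M = Phi N"
    have "\<forall>e\<in>#M. e \<subseteq> {1..n} \<and> 2 \<le> card e" "\<forall>e\<in>#N. e \<subseteq> {1..n} \<and> 2 \<le> card e" using a by auto
    then show "RelM ?E T M N" using c.conn2[of M N] a(3) by simp
  qed
qed

theorem theorem5p6:
  fixes n :: nat
  shows "generated_in_degrees_2_3 {e. e \<subseteq> {1..n} \<and> 2 \<le> card e \<and> card e \<le> 3}
           (toric_ideal {e. e \<subseteq> {1..n} \<and> 2 \<le> card e \<and> card e \<le> 3} :: (nat set, 'k::field) mpoly set)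
       \<and> generated_in_degrees_2_3 {e. e \<subseteq> {1..n} \<and> 2 \<le> card e}
           (toric_ideal {e. e \<subseteq> {1..n} \<and> 2 \<le> card e} :: (nat set, 'k) mpoly set)"
  using gen23_of_CP[OF CP1[where T="TYPE('k)"]] gen23_of_CP[OF CP2[where T="TYPE('k)"]] by blast

end
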